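(* For every relaxed scenario $\mathscr{S}$, the strict orthology graph $\mathrm{sO}(\mathscr{S})$ is a cograph.
   Context: All trees are planted phylogenetic trees: a tree $T$ has a distinguished vertex $0_T$ of degree $1$ whose unique neighbor $\rho_T$ is the root, and every vertex other than $0_T$ and the leaves $L(T)$ has at least two children. For $x,y\in V(T)$ write $y\preceq_T x$ if $x$ lies on the path from $0_T$ to $y$; edges are written $uv$ with $v\prec_T u$. The order extends to $V(T)\cup E(T)$: for a vertex $x$ and an edge $e=uv$, $x\preceq_T e$ iff $x\preceq_T v$, and $e\preceq_T x$ iff $u\preceq_T x$; for edges, $uv\preceq_T ab$ iff $v\preceq_T b$. Two elements are comparable if one is $\preceq$ the other. $\mathrm{lca}_T$ denotes the last common ancestor. A time map for $T$ is $\tau_T\colon V(T)\to\mathbb{R}$ with $\tau_T(x)<\tau_T(y)$ whenever $x\prec_T y$. A relaxed scenario $\mathscr{S}=(T,S,\sigma,\mu,\tau_T,\tau_S)$ consists of a gene tree $T$ with time map $\tau_T$, a species tree $S$ with time map $\tau_S$, a map $\sigma\colon L(T)\to M$ with $M\subseteq L(S)$, and a map $\mu\colon V(T)\to V(S)\cup E(S)$ such that (S0) $\mu(x)=0_S$ iff $x=0_T$; (S1) $\mu(x)\in L(S)$ iff $x\in L(T)$, in which case $\mu(x)=\sigma(x)$; (S2) if $\mu(x)\in V(S)$ then $\tau_S(\mu(x))=\tau_T(x)$; (S3) if $\mu(x)=uv\in E(S)$ then $\tau_S(v)<\tau_T(x)<\tau_S(u)$. An edge $uv\in E(T)$ is an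 HGT-edge if $\mu(u)$ and $\mu(v)$ are incomparable in $S$. The strict orthology graph $\mathrm{sO}(\mathscr{S})$ has vertex set $L(T)$ and edges $xy$, $x\ne y$, such that $\mu(\mathrm{lca}_T(x,y))=\mathrm{lca}_S(\sigma(x),\sigma(y))$ and the path between $x$ and $y$ in $T$ contains no HGT-edge. A cograph is a graph with no induced path on four vertices. *)

theory Defs
  imports Main "HOL.Real"
begin

text \<open>A rooted tree is given by a vertex set V, a set E of directed edges (u,v)
  meaning v is a child of u (so v \<prec> u), and the distinguished vertex 0_T.\<close>

definition children :: "('v \<times> 'v) set \<Rightarrow> 'v \<Rightarrow> 'v set" where
  "children E x = {y. (x, y) \<in> E}"

definition planted_tree :: "'v set \<Rightarrow> ('v \<times> 'v) set \<Rightarrow> 'v \<Rightarrow> bool" where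
  "planted_tree V E r \<longleftrightarrow>
     finite V \<and> E \<subseteq> V \<times> V \<and> r \<in> V \<and>
     (\<forall>x\<in>V. (r, x) \<in> E\<^sup>*) \<and>
     (\<forall>x. (x, r) \<notin> E) \<and>
     (\<forall>x\<in>V - {r}. \<exists>!u. (u, x) \<in> E) \<and>
     card (children E r) = 1 \<and>
     (\<forall>x\<in>V. x \<noteq> r \<and> children E x \<noteq> {} \<longrightarrow> card (children E x) \<ge> 2)"

definition leaves :: "'v set \<Rightarrow> ('v \<times> 'v) set \<Rightarrow> 'v set" where
  "leaves V E = {x \<in> V. children E x = {}}"

text \<open>preceq E y x : y \<preceq> x, i.e. x lies on the path from the planted root to y.\<close>
definition preceq :: "('v \<times> 'v) set \<Rightarrow> 'v \<Rightarrow> 'v \<Rightarrow> bool" where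
  "preceq E y x \<longleftrightarrow> (x, y) \<in> E\<^sup>*"

definition prec :: "('v \<times> 'v) set \<Rightarrow> 'v \<Rightarrow> 'v \<Rightarrow> bool" where
  "prec E y x \<longleftrightarrow> preceq E y x \<and> y \<noteq> x"

text \<open>Elements of V(T) \<union> E(T); the edge uv is written Ed u v with v \<prec> u.\<close>
datatype 'v tree_elem = Vx 'v | Ed 'v 'v

fun preceq_el :: "('v \<times> 'v) set \<Rightarrow> 'v tree_elem \<Rightarrow> 'v tree_elem \<Rightarrow> bool" where
  "preceq_el E (Vx x) (Vx y) = preceq E x y"
| "preceq_el E (Vx x) (Ed u v) = preceq E x v"
| "preceq_el E (Ed u v) (Vx x) = preceq E u x"
| "preceq_el E (Ed u v) (Ed a b) = preceq E v b"

definition comparable :: "('v \<times> 'v) set \<Rightarrow> 'v tree_elem \<Rightarrow> 'v tree_elem \<Rightarrow> bool" where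
  "comparable E a b \<longleftrightarrow> preceq_el E a b \<or> preceq_el E b a"

definition elems :: "'v set \<Rightarrow> ('v \<times> 'v) set \<Rightarrow> 'v tree_elem set" where
  "elems V E = Vx ` V \<union> (\<lambda>(u, v). Ed u v) ` E"

definition lca :: "('v \<times> 'v) set \<Rightarrow> 'v \<Rightarrow> 'v \<Rightarrow> 'v" where
  "lca E x y = (THE z. preceq E x z \<and> preceq E y z \<and>
                  (\<forall>w. preceq E x w \<and> preceq E y w \<longrightarrow> preceq E z w))"

definition time_map :: "'v set \<Rightarrow> ('v \<times> 'v) set \<Rightarrow> ('v \<Rightarrow> real) \<Rightarrow> bool" where
  "time_map V E \<tau> \<longleftrightarrow> (\<forall>x\<in>V. \<forall>y\<in>V. prec E x y \<longrightarrow> \<tau> x < \<tau> y)"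

definition relaxed_scenario ::
  "'v set \<Rightarrow> ('v \<times> 'v) set \<Rightarrow> 'v \<Rightarrow> 's set \<Rightarrow> ('s \<times> 's) set \<Rightarrow> 's \<Rightarrow>
   ('v \<Rightarrow> 's) \<Rightarrow> ('v \<Rightarrow> 's tree_elem) \<Rightarrow> ('v \<Rightarrow> real) \<Rightarrow> ('s \<Rightarrow> real) \<Rightarrow> bool" where
  "relaxed_scenario VT ET rT VS ES rS \<sigma> \<mu> \<tau>T \<tau>S \<longleftrightarrow>
     planted_tree VT ET rT \<and> planted_tree VS ES rS \<and>
     time_map VT ET \<tau>T \<and> time_map VS ES \<tau>S \<and>
     (\<forall>x\<in>leaves VT ET. \<sigma> x \<in> leaves VS ES) \<and>
     (\<forall>x\<in>VT. \<mu> x \<in> elems VS ES) \<and>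
     (\<forall>x\<in>VT. \<mu> x = Vx rS \<longleftrightarrow> x = rT) \<and>
     (\<forall>x\<in>VT. \<mu> x \<in> Vx ` leaves VS ES \<longleftrightarrow> x \<in> leaves VT ET) \<and>
     (\<forall>x\<in>leaves VT ET. \<mu> x = Vx (\<sigma> x)) \<and>
     (\<forall>x\<in>VT. \<forall>s. \<mu> x = Vx s \<longrightarrow> \<tau>S s = \<tau>T x) \<and>
     (\<forall>x\<in>VT. \<forall>u v. \<mu> x = Ed u v \<longrightarrow> \<tau>S v < \<tau>T x \<and> \<tau>T x < \<tau>S u)"

definition hgt_edge ::
  "('v \<times> 'v) set \<Rightarrow> ('s \<times> 's) set \<Rightarrow> ('v \<Rightarrow> 's tree_elem) \<Rightarrow> 'v \<Rightarrow> 'v \<Rightarrow> bool" where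
  "hgt_edge ET ES \<mu> u v \<longleftrightarrow> (u, v) \<in> ET \<and> \<not> comparable ES (\<mu> u) (\<mu> v)"

text \<open>The edge uv lies on the path between x and y: it lies on the path from x or
  from y up to lca(x,y).\<close>
definition on_path :: "('v \<times> 'v) set \<Rightarrow> 'v \<Rightarrow> 'v \<Rightarrow> 'v \<Rightarrow> 'v \<Rightarrow> bool" where
  "on_path E x y u v \<longleftrightarrow> (u, v) \<in> E \<and> (preceq E x v \<or> preceq E y v) \<and>
      prec E v (lca E x y)"

definition sO_edge ::
  "'v set \<Rightarrow> ('v \<times> 'v) set \<Rightarrow> ('s \<times> 's) set \<Rightarrow> ('v \<Rightarrow> 's) \<Rightarrow> ('v \<Rightarrow> 's tree_elem)
   \<Rightarrow> 'v \<Rightarrow> 'v \<Rightarrow> bool" where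
  "sO_edge VT ET ES \<sigma> \<mu> x y \<longleftrightarrow>
     x \<in> leaves VT ET \<and> y \<in> leaves VT ET \<and> x \<noteq> y \<and>
     \<mu> (lca ET x y) = Vx (lca ES (\<sigma> x) (\<sigma> y)) \<and>
     (\<forall>u v. on_path ET x y u v \<longrightarrow> \<not> hgt_edge ET ES \<mu> u v)"

text \<open>A graph (vertex set V, symmetric adjacency adj) is a cograph if it has no
  induced path on four vertices.\<close>
definition cograph :: "'a set \<Rightarrow> ('a \<Rightarrow> 'a \<Rightarrow> bool) \<Rightarrow> bool" where
  "cograph V adj \<longleftrightarrow> \<not> (\<exists>a\<in>V. \<exists>b\<in>V. \<exists>c\<in>V. \<exists>d\<in>V.
      distinct [a, b, c, d] \<and> adj a b \<and> adj b c \<and> adj c d \<and>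
      \<not> adj a c \<and> \<not> adj b d \<and> \<not> adj a d)"

end

theory Submission
  imports Defs
begin


locale ptree =
  fixes V :: "'v set" and E :: "('v \<times> 'v) set" and r :: 'v and \<tau> :: "'v \<Rightarrow> real"
  assumes pt: "planted_tree V E r" and tm: "time_map V E \<tau>"
begin

lemma E_sub: "E \<subseteq> V \<times> V" using pt unfolding planted_tree_def by blast
lemma finV: "finite V" using pt unfolding planted_tree_def by blast
lemma r_in: "r \<in> V" using pt unfolding planted_tree_def by blast
lemma r_reach: "x \<in> V \<Longrightarrow> (r,x) \<in> E\<^sup>*" using pt unfolding planted_tree_def by blast
lemma r_noparent: "(x,r) \<notin> E" using pt unfolding planted_tree_def by blast
lemma edge_V: "(u,x) \<in> E \<Longrightarrow> u \<in> V \<and> x \<in> V" using E_sub by blast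

lemma uniq_parent: assumes "(u,x) \<in> E" "(u',x) \<in> E" shows "u = u'"
proof -
  have "x \<in> V - {r}" using assms edge_V r_noparent by blast
  then have "\<exists>!u. (u,x) \<in> E" using pt unfolding planted_tree_def by blast
  then show ?thesis using assms by blast
qed

lemma rt_V: "(x,y) \<in> E\<^sup>* \<Longrightarrow> y \<in> V \<Longrightarrow> x \<in> V"
  by (erule converse_rtranclE) (auto dest: edge_V)

lemma rt_V2: "(x,y) \<in> E\<^sup>* \<Longrightarrow> x \<in> V \<Longrightarrow> y \<in> V"
  by (induction rule: rtrancl_induct) (auto dest: edge_V)

lemma no_loop: "(x,x) \<notin> E"
proof
  assume a: "(x,x) \<in> E"
  then have "x \<in> V" using edge_V by blast
  then have "(r,x) \<in> E\<^sup>*" by (rule r_reach)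
  then have "(x,x) \<notin> E"
  proof (induction rule: rtrancl_induct)
    case base then show ?case using r_noparent by blast
  next
    case (step y z) then show ?case using uniq_parent by blast
  qed
  with a show False by blast
qed

lemma tau_lt: "x \<in> V \<Longrightarrow> (y,x) \<in> E\<^sup>* \<Longrightarrow> x \<noteq> y \<Longrightarrow> \<tau> x < \<tau> y"
  using tm rt_V unfolding time_map_def prec_def preceq_def by blast

lemma tau_le: "x \<in> V \<Longrightarrow> (y,x) \<in> E\<^sup>* \<Longrightarrow> \<tau> x \<le> \<tau> y"
  using tau_lt by (cases "x = y") force+

lemma antisym: assumes "(x,y) \<in> E\<^sup>*" "(y,x) \<in> E\<^sup>*" shows "x = y"
proof (rule ccontr)
  assume ne: "x \<noteq> y"
  from assms(1) ne obtain z where "(x,z) \<in> E" by (metis converse_rtranclE)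
  then have "x \<in> V" using edge_V by blast
  then have "y \<in> V" using assms rt_V2 by blast
  have "\<tau> y < \<tau> x" using tau_lt[OF \<open>y \<in> V\<close> assms(1)] ne by blast
  moreover have "\<tau> x < \<tau> y" using tau_lt[OF \<open>x \<in> V\<close> assms(2)] ne by blast
  ultimately show False by simp
qed

lemma chain: "(a,x) \<in> E\<^sup>* \<Longrightarrow> (b,x) \<in> E\<^sup>* \<Longrightarrow> (a,b) \<in> E\<^sup>* \<or> (b,a) \<in> E\<^sup>*"
proof (induction x arbitrary: b rule: rtrancl_induct)
  case base then show ?case by blast
next
  case (step y z)
  from step.prems show ?case
  proof (cases rule: rtranclE)
    case base then show ?thesis using step.hyps by auto
  next
    case (step y')
    then have "y' = y" using uniq_parent \<open>(y,z) \<in> E\<close> by blast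
    then show ?thesis using step.IH step by blast
  qed
qed

lemma between: assumes "(v,w) \<in> E" "(v,z) \<in> E\<^sup>*" "(z,w) \<in> E\<^sup>*" shows "z = w \<or> z = v"
  using assms(3)
proof (cases rule: rtranclE)
  case base then show ?thesis by blast
next
  case (step z')
  then have "z' = v" using uniq_parent assms(1) by blast
  then show ?thesis using antisym assms(2) step by blast
qed

lemma siblings: "(s,c) \<in> E \<Longrightarrow> (s,c') \<in> E \<Longrightarrow> (c',c) \<in> E\<^sup>* \<Longrightarrow> c = c'"
  using between[of s c c'] no_loop by blast

lemma leaf_below: "x \<in> leaves V E \<Longrightarrow> (x,y) \<in> E\<^sup>* \<Longrightarrow> y = x"
  unfolding leaves_def children_def by (erule converse_rtranclE) auto

lemma child_toward: "(v,p) \<in> E\<^sup>* \<Longrightarrow> v \<noteq> p \<Longrightarrow> \<exists>w. (v,w) \<in> E \<and> (w,p) \<in> E\<^sup>*"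
  by (erule converse_rtranclE) auto

lemma lca_props:
  assumes "x \<in> V" "y \<in> V"
  shows "(lca E x y, x) \<in> E\<^sup>* \<and> (lca E x y, y) \<in> E\<^sup>* \<and>
         (\<forall>w. (w,x) \<in> E\<^sup>* \<and> (w,y) \<in> E\<^sup>* \<longrightarrow> (w, lca E x y) \<in> E\<^sup>*)"
proof -
  define C where "C = {z. (z,x) \<in> E\<^sup>* \<and> (z,y) \<in> E\<^sup>*}"
  have CV: "C \<subseteq> V" unfolding C_def using rt_V assms by blast
  have fin: "finite C" using finite_subset[OF CV finV] .
  have "r \<in> C" unfolding C_def using r_reach assms by blast
  then have ne: "C \<noteq> {}" by blast
  define z where "z = arg_min_on \<tau> C"
  have zC: "z \<in> C" and zmin: "\<forall>w\<in>C. \<tau> z \<le> \<tau> w"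
    using arg_min_if_finite[OF fin ne, of \<tau>] unfolding z_def by (auto simp: not_less)
  have zlow: "(w,z) \<in> E\<^sup>*" if "w \<in> C" for w
  proof -
    have "(z,w) \<in> E\<^sup>* \<or> (w,z) \<in> E\<^sup>*" using chain zC that unfolding C_def by blast
    moreover have "\<not> ((z,w) \<in> E\<^sup>* \<and> z \<noteq> w)"
    proof
      assume h: "(z,w) \<in> E\<^sup>* \<and> z \<noteq> w"
      then have "\<tau> w < \<tau> z" using tau_lt CV that by blast
      then show False using zmin that by force
    qed
    ultimately show ?thesis by blast
  qed
  have P: "(z,x) \<in> E\<^sup>* \<and> (z,y) \<in> E\<^sup>* \<and> (\<forall>w. (w,x) \<in> E\<^sup>* \<and> (w,y) \<in> E\<^sup>* \<longrightarrow> (w, z) \<in> E\<^sup>*)"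
    using zC zlow unfolding C_def by blast
  have "lca E x y = z"
    unfolding lca_def preceq_def
  proof (rule the_equality)
    show "(z,x) \<in> E\<^sup>* \<and> (z,y) \<in> E\<^sup>* \<and> (\<forall>w. (w,x) \<in> E\<^sup>* \<and> (w,y) \<in> E\<^sup>* \<longrightarrow> (w, z) \<in> E\<^sup>*)"
      using P .
  next
    fix z' assume "(z',x) \<in> E\<^sup>* \<and> (z',y) \<in> E\<^sup>* \<and> (\<forall>w. (w,x) \<in> E\<^sup>* \<and> (w,y) \<in> E\<^sup>* \<longrightarrow> (w, z') \<in> E\<^sup>*)"
    then show "z' = z" using P antisym by blast
  qed
  then show ?thesis using P by simp
qed

lemma lca_eq:
  assumes "x \<in> V" "y \<in> V" "(z,x) \<in> E\<^sup>*" "(z,y) \<in> E\<^sup>*"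
    "\<And>w. (w,x) \<in> E\<^sup>* \<Longrightarrow> (w,y) \<in> E\<^sup>* \<Longrightarrow> (w,z) \<in> E\<^sup>*"
  shows "lca E x y = z"
  using lca_props[OF assms(1,2)] assms(3-5) antisym by blast

lemma el_refl: "preceq_el E e e"
  by (cases e) (auto simp: preceq_def)

lemma el_trans:
  assumes "e1 \<in> elems V E" "e2 \<in> elems V E" "e3 \<in> elems V E"
    "preceq_el E e1 e2" "preceq_el E e2 e3"
  shows "preceq_el E e1 e3"
proof -
  have edge: "(u,v) \<in> E" if "Ed u v \<in> elems V E" for u v
    using that unfolding elems_def by auto
  show ?thesis
  proof (cases e1)
    case (Vx x) note e1 = this
    show ?thesis
    proof (cases e2)
      case (Vx y) note e2 = this
      show ?thesis using assms e1 e2 by (cases e3) (auto simp: preceq_def)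
    next
      case (Ed u v) note e2 = this
      have "(u,v) \<in> E" using edge assms(2) e2 by blast
      then show ?thesis using assms e1 e2 by (cases e3) (auto simp: preceq_def)
    qed
  next
    case (Ed u v) note e1 = this
    have uv: "(u,v) \<in> E" using edge assms(1) e1 by blast
    show ?thesis
    proof (cases e2)
      case (Vx y) note e2 = this
      show ?thesis using assms e1 e2 uv by (cases e3) (auto simp: preceq_def)
    next
      case (Ed a b) note e2 = this
      have ab: "(a,b) \<in> E" using edge assms(2) e2 by blast
      show ?thesis
      proof (cases e3)
        case (Ed c d) then show ?thesis using assms e1 e2 by (auto simp: preceq_def)
      next
        case (Vx y) note e3 = this
        have vb: "(b,v) \<in> E\<^sup>*" and ay: "(y,a) \<in> E\<^sup>*" using assms e1 e2 e3 by (auto simp: preceq_def)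
        have "(a,u) \<in> E\<^sup>*"
        proof (cases "v = b")
          case True then show ?thesis using uniq_parent uv ab by blast
        next
          case False
          have "(u,b) \<in> E\<^sup>* \<or> (b,u) \<in> E\<^sup>*" using chain[of u v b] uv vb by blast
          then show ?thesis
          proof
            assume "(u,b) \<in> E\<^sup>*"
            then have "b = v \<or> b = u" using between[OF uv _ vb] by blast
            then show ?thesis using False ab by blast
          next
            assume "(b,u) \<in> E\<^sup>*"
            then show ?thesis using ab by (meson converse_rtrancl_into_rtrancl)
          qed
        qed
        then have "(y,u) \<in> E\<^sup>*" using ay by (meson rtrancl_trans)
        then show ?thesis using e1 e3 by (simp add: preceq_def)
      qed
    qed
  qed
qed

lemma notboth: "(s,c) \<in> E \<Longrightarrow> (s,c') \<in> E \<Longrightarrow> c \<noteq> c' \<Longrightarrow> (c,y) \<in> E\<^sup>* \<Longrightarrow> (c',y) \<in> E\<^sup>* \<Longrightarrow> False"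
  using chain[of c y c'] siblings[of s c c'] siblings[of s c' c] by blast

lemma lca_sib:
  assumes "x \<in> V" "y \<in> V" "(s,c) \<in> E" "(s,c') \<in> E" "(c,x) \<in> E\<^sup>*" "(c',y) \<in> E\<^sup>*"
  shows "lca E x y = s \<longleftrightarrow> c \<noteq> c'"
proof
  assume h: "lca E x y = s"
  show "c \<noteq> c'"
  proof
    assume "c = c'"
    then have "(c, lca E x y) \<in> E\<^sup>*" using lca_props[OF assms(1,2)] assms(5,6) by blast
    then have "c = s" using h antisym assms(3) by blast
    then show False using assms(3) no_loop by blast
  qed
next
  assume ne: "c \<noteq> c'"
  have sx: "(s,x) \<in> E\<^sup>*" using assms(3,5) by (meson converse_rtrancl_into_rtrancl)
  have sy: "(s,y) \<in> E\<^sup>*" using assms(4,6) by (meson converse_rtrancl_into_rtrancl)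
  show "lca E x y = s"
  proof (rule lca_eq[OF assms(1,2) sx sy])
    fix w assume wx: "(w,x) \<in> E\<^sup>*" and wy: "(w,y) \<in> E\<^sup>*"
    have ncw: "(c,w) \<notin> E\<^sup>*"
    proof
      assume "(c,w) \<in> E\<^sup>*"
      then have "(c,y) \<in> E\<^sup>*" using wy by (meson rtrancl_trans)
      then show False using notboth[OF assms(3,4) ne _ assms(6)] by blast
    qed
    then have wc: "(w,c) \<in> E\<^sup>*" using chain[OF wx assms(5)] by blast
    have "(w,s) \<in> E\<^sup>* \<or> (s,w) \<in> E\<^sup>*" using chain[OF wc, of s] assms(3) by blast
    then show "(w,s) \<in> E\<^sup>*"
    proof
      assume "(s,w) \<in> E\<^sup>*"
      then have "w = c \<or> w = s" using between[OF assms(3) _ wc] by blast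
      then show ?thesis using ncw by blast
    qed
  qed
qed

end


locale scen =
  fixes VT :: "'v set" and ET :: "('v \<times> 'v) set" and rT :: 'v
    and VS :: "'s set" and ES :: "('s \<times> 's) set" and rS :: 's
    and \<sigma> :: "'v \<Rightarrow> 's" and \<mu> :: "'v \<Rightarrow> 's tree_elem"
    and \<tau>T :: "'v \<Rightarrow> real" and \<tau>S :: "'s \<Rightarrow> real"
  assumes rs: "relaxed_scenario VT ET rT VS ES rS \<sigma> \<mu> \<tau>T \<tau>S"
begin

lemma rsD1: "planted_tree VT ET rT"
  using rs unfolding relaxed_scenario_def by (elim conjE) assumption

lemma rsD2: "planted_tree VS ES rS"
  using rs unfolding relaxed_scenario_def by (elim conjE) assumption

lemma rsD3: "time_map VT ET \<tau>T"
  using rs unfolding relaxed_scenario_def by (elim conjE) assumption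

lemma rsD4: "time_map VS ES \<tau>S"
  using rs unfolding relaxed_scenario_def by (elim conjE) assumption

lemma rsD5: "\<forall>x\<in>leaves VT ET. \<sigma> x \<in> leaves VS ES"
  using rs unfolding relaxed_scenario_def by (elim conjE) assumption

lemma rsD6: "\<forall>x\<in>VT. \<mu> x \<in> elems VS ES"
  using rs unfolding relaxed_scenario_def by (elim conjE) assumption

lemma rsD7: "\<forall>x\<in>VT. \<mu> x \<in> Vx ` leaves VS ES \<longleftrightarrow> x \<in> leaves VT ET"
  using rs unfolding relaxed_scenario_def by (elim conjE) assumption

lemma rsD8: "\<forall>x\<in>leaves VT ET. \<mu> x = Vx (\<sigma> x)"
  using rs unfolding relaxed_scenario_def by (elim conjE) assumption

lemma rsD9: "\<forall>x\<in>VT. \<forall>s. \<mu> x = Vx s \<longrightarrow> \<tau>S s = \<tau>T x"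
  using rs unfolding relaxed_scenario_def by (elim conjE) assumption

lemma rsD10: "\<forall>x\<in>VT. \<forall>u v. \<mu> x = Ed u v \<longrightarrow> \<tau>S v < \<tau>T x \<and> \<tau>T x < \<tau>S u"
  using rs unfolding relaxed_scenario_def by (elim conjE) assumption

sublocale T: ptree VT ET rT \<tau>T
  using rsD1 rsD3 by unfold_locales
sublocale S: ptree VS ES rS \<tau>S
  using rsD2 rsD4 by unfold_locales

lemma mu_el: "x \<in> VT \<Longrightarrow> \<mu> x \<in> elems VS ES"
  using rsD6 by blast
lemma mu_leaf: "x \<in> leaves VT ET \<Longrightarrow> \<mu> x = Vx (\<sigma> x)"
  using rsD8 by blast
lemma sigma_leaf: "x \<in> leaves VT ET \<Longrightarrow> \<sigma> x \<in> leaves VS ES"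
  using rsD5 by blast
lemma mu_leafS: "x \<in> VT \<Longrightarrow> \<mu> x = Vx s \<Longrightarrow> s \<in> leaves VS ES \<Longrightarrow> x \<in> leaves VT ET"
  using rsD7 by blast
lemma tV: "x \<in> VT \<Longrightarrow> \<mu> x = Vx s \<Longrightarrow> \<tau>S s = \<tau>T x"
  using rsD9 by blast
lemma tE: "x \<in> VT \<Longrightarrow> \<mu> x = Ed u v \<Longrightarrow> \<tau>S v < \<tau>T x \<and> \<tau>T x < \<tau>S u"
  using rsD10 by blast
lemma leavesV: "x \<in> leaves V E \<Longrightarrow> x \<in> V" unfolding leaves_def by blast

lemma elV: "Vx s \<in> elems VS ES \<Longrightarrow> s \<in> VS" unfolding elems_def by auto
lemma elE: "Ed a b \<in> elems VS ES \<Longrightarrow> (a,b) \<in> ES" unfolding elems_def by auto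
lemma elV': "s \<in> VS \<Longrightarrow> Vx s \<in> elems VS ES" unfolding elems_def by auto
lemma elE': "(a,b) \<in> ES \<Longrightarrow> Ed a b \<in> elems VS ES" unfolding elems_def by auto

lemma mu_mono:
  assumes uw: "(u,w) \<in> ET" and nh: "\<not> hgt_edge ET ES \<mu> u w"
  shows "preceq_el ES (\<mu> w) (\<mu> u)"
proof (rule ccontr)
  assume npre: "\<not> preceq_el ES (\<mu> w) (\<mu> u)"
  have cmp: "comparable ES (\<mu> u) (\<mu> w)" using nh uw unfolding hgt_edge_def by blast
  then have pu: "preceq_el ES (\<mu> u) (\<mu> w)" using npre unfolding comparable_def by blast
  have uV: "u \<in> VT" and wV: "w \<in> VT" using uw T.edge_V by auto
  have tw: "\<tau>T w < \<tau>T u" using T.tau_lt[OF wV, of u] uw T.no_loop by blast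
  have mu: "\<mu> u \<in> elems VS ES" and mw: "\<mu> w \<in> elems VS ES" using mu_el uV wV by auto
  show False
  proof (cases "\<mu> u")
    case (Vx s) note U = this
    have sV: "s \<in> VS" by (metis mu U elV)
    show False
    proof (cases "\<mu> w")
      case (Vx s')
      then have "(s',s) \<in> ES\<^sup>*" using pu U by (simp add: preceq_def)
      then have "\<tau>S s \<le> \<tau>S s'" using S.tau_le sV by blast
      then show False using tV[OF uV U] tV[OF wV Vx] tw by simp
    next
      case (Ed a b)
      then have "(b,s) \<in> ES\<^sup>*" using pu U by (simp add: preceq_def)
      then have "\<tau>S s \<le> \<tau>S b" using S.tau_le sV by blast
      then show False using tV[OF uV U] tE[OF wV Ed] tw by simp
    qed
  next
    case (Ed a b) note U = this
    have ab: "(a,b) \<in> ES" by (metis mu U elE)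
    have aV: "a \<in> VS" using ab S.edge_V by blast
    show False
    proof (cases "\<mu> w")
      case (Vx s)
      then have "(s,a) \<in> ES\<^sup>*" using pu U by (simp add: preceq_def)
      then have "\<tau>S a \<le> \<tau>S s" using S.tau_le aV by blast
      then show False using tE[OF uV U] tV[OF wV Vx] tw by simp
    next
      case (Ed c d) note W = this
      have cd: "(c,d) \<in> ES" by (metis mw W elE)
      have db: "(d,b) \<in> ES\<^sup>*" using pu U W by (simp add: preceq_def)
      show False
      proof (cases "b = d")
        case True
        then have "a = c" using S.uniq_parent ab cd by blast
        then have "\<mu> u = \<mu> w" using U W True by simp
        then show False using npre S.el_refl by metis
      next
        case False
        have "(a,d) \<in> ES\<^sup>* \<or> (d,a) \<in> ES\<^sup>*" using S.chain[of a b d] ab db by blast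
        then have da: "(d,a) \<in> ES\<^sup>*"
        proof
          assume "(a,d) \<in> ES\<^sup>*"
          then have "d = b \<or> d = a" using S.between[OF ab _ db] by blast
          then show ?thesis using False by blast
        qed
        have dV: "d \<in> VS" using cd S.edge_V by blast
        have "\<tau>S a \<le> \<tau>S d" using S.tau_le[OF aV] da by blast
        then show False using tE[OF uV U] tE[OF wV W] tw by simp
      qed
    qed
  qed
qed

definition ok :: "'v \<Rightarrow> 'v \<Rightarrow> bool" where
  "ok p L \<longleftrightarrow> (\<forall>u z. (u,z) \<in> ET \<and> (z,p) \<in> ET\<^sup>* \<and> (L,z) \<in> ET\<^sup>* \<and> z \<noteq> L \<longrightarrow> \<not> hgt_edge ET ES \<mu> u z)"

lemma mu_path:
  assumes p: "p \<in> leaves VT ET" and wp: "(w,p) \<in> ET\<^sup>*" and okp: "ok p w"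
  shows "preceq_el ES (Vx (\<sigma> p)) (\<mu> w)"
proof -
  have pV: "p \<in> VT" using leavesV[OF p] .
  have "(w,z) \<in> ET\<^sup>* \<longrightarrow> preceq_el ES (\<mu> p) (\<mu> z)" if "(z,p) \<in> ET\<^sup>*" for z
    using that
  proof (induction rule: converse_rtrancl_induct)
    case base then show ?case using S.el_refl by blast
  next
    case (step z z')
    show ?case
    proof
      assume wz: "(w,z) \<in> ET\<^sup>*"
      have wz': "(w,z') \<in> ET\<^sup>*" using wz step.hyps(1) by (meson rtrancl.rtrancl_into_rtrancl)
      have "z' \<noteq> w"
      proof
        assume "z' = w"
        then have "(z,w) \<in> ET\<^sup>*" using step.hyps(1) by simp
        then have "z = w" using T.antisym[OF wz] by simp
        then show False using step.hyps(1) \<open>z' = w\<close> T.no_loop by blast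
      qed
      have "(z,z') \<in> ET \<and> (z',p) \<in> ET\<^sup>* \<and> (w,z') \<in> ET\<^sup>* \<and> z' \<noteq> w"
        using step.hyps wz' \<open>z' \<noteq> w\<close> by simp
      then have "\<not> hgt_edge ET ES \<mu> z z'" using okp unfolding ok_def by blast
      then have m1: "preceq_el ES (\<mu> z') (\<mu> z)" using mu_mono step.hyps(1) by blast
      have m2: "preceq_el ES (\<mu> p) (\<mu> z')" using step.IH wz' by blast
      have zV: "z \<in> VT" and z'V: "z' \<in> VT" using step.hyps(1) T.edge_V by auto
      show "preceq_el ES (\<mu> p) (\<mu> z)"
        using S.el_trans[OF mu_el[OF pV] mu_el[OF z'V] mu_el[OF zV] m2 m1] .
    qed
  qed
  then have "preceq_el ES (\<mu> p) (\<mu> w)" using wp by blast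
  then show ?thesis using mu_leaf[OF p] by simp
qed

lemma class_exists:
  assumes vw: "(v,w) \<in> ET" and mv: "\<mu> v = Vx s" and pre: "preceq_el ES (\<mu> w) (Vx s)"
  shows "\<exists>c. (s,c) \<in> ES \<and> preceq_el ES (\<mu> w) (Ed s c)"
proof -
  have vV: "v \<in> VT" and wV: "w \<in> VT" using vw T.edge_V by auto
  have tw: "\<tau>T w < \<tau>T v" using T.tau_lt[OF wV, of v] vw T.no_loop by blast
  have ts: "\<tau>T v = \<tau>S s" using tV[OF vV mv] by simp
  show ?thesis
  proof (cases "\<mu> w")
    case (Vx t)
    then have st: "(s,t) \<in> ES\<^sup>*" using pre by (simp add: preceq_def)
    have "t \<noteq> s" using tV[OF wV Vx] tw ts by auto
    then obtain c where "(s,c) \<in> ES" "(c,t) \<in> ES\<^sup>*" using S.child_toward st by metis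
    then show ?thesis using Vx by (auto simp: preceq_def)
  next
    case (Ed a b)
    have ab: "(a,b) \<in> ES" using mu_el[OF wV] Ed elE by metis
    have sa: "(s,a) \<in> ES\<^sup>*" using pre Ed by (simp add: preceq_def)
    show ?thesis
    proof (cases "a = s")
      case True then show ?thesis using Ed ab by (auto simp: preceq_def)
    next
      case False
      then obtain c where sc: "(s,c) \<in> ES" and ca: "(c,a) \<in> ES\<^sup>*" using S.child_toward sa by metis
      have "(c,b) \<in> ES\<^sup>*" using ca ab by (meson rtrancl.rtrancl_into_rtrancl)
      then show ?thesis using Ed sc by (auto simp: preceq_def)
    qed
  qed
qed

lemma sO_ok:
  assumes "sO_edge VT ET ES \<sigma> \<mu> x y"
  shows "ok x (lca ET x y) \<and> ok y (lca ET x y)"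
  using assms unfolding sO_edge_def ok_def on_path_def prec_def preceq_def by blast

lemma sO_char:
  assumes "p \<in> leaves VT ET" "q \<in> leaves VT ET" "p \<noteq> q" "ok p (lca ET p q)" "ok q (lca ET p q)"
  shows "sO_edge VT ET ES \<sigma> \<mu> p q \<longleftrightarrow> \<mu> (lca ET p q) = Vx (lca ES (\<sigma> p) (\<sigma> q))"
  using assms unfolding sO_edge_def ok_def on_path_def prec_def preceq_def by blast

lemma ok_up:
  assumes "ok p L1" "(L1,p) \<in> ET\<^sup>*" "(L2,L1) \<in> ET\<^sup>*" "ok q L2" "(L1,q) \<in> ET\<^sup>*"
  shows "ok p L2"
  unfolding ok_def
proof (intro allI impI)
  fix u z assume h: "(u,z) \<in> ET \<and> (z,p) \<in> ET\<^sup>* \<and> (L2,z) \<in> ET\<^sup>* \<and> z \<noteq> L2"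
  have "(z,L1) \<in> ET\<^sup>* \<or> (L1,z) \<in> ET\<^sup>*" using T.chain[of z p L1] h assms(2) by blast
  then show "\<not> hgt_edge ET ES \<mu> u z"
  proof
    assume "(z,L1) \<in> ET\<^sup>*"
    then have "(z,q) \<in> ET\<^sup>*" using assms(5) by (meson rtrancl_trans)
    then show ?thesis using assms(4) h unfolding ok_def by blast
  next
    assume zl: "(L1,z) \<in> ET\<^sup>*"
    show ?thesis
    proof (cases "z = L1")
      case True
      then have "(z,q) \<in> ET\<^sup>*" using assms(5) by simp
      then show ?thesis using assms(4) h unfolding ok_def by blast
    next
      case False
      then show ?thesis using assms(1) h zl unfolding ok_def by blast
    qed
  qed
qed

end


context scen begin

abbreviation sO where "sO \<equiv> sO_edge VT ET ES \<sigma> \<mu>"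

lemma core:
  assumes La: "a \<in> leaves VT ET" and Lb: "b \<in> leaves VT ET"
    and Lc: "c \<in> leaves VT ET" and Ld: "d \<in> leaves VT ET"
    and adj: "sO a b" "sO b c" "sO c d"
    and nadj: "\<not> sO a c" "\<not> sO b d" "\<not> sO a d"
    and below: "(v,a) \<in> ET\<^sup>*" "(v,b) \<in> ET\<^sup>*" "(v,c) \<in> ET\<^sup>*" "(v,d) \<in> ET\<^sup>*"
    and oks: "ok a v" "ok b v" "ok c v" "ok d v"
    and xy: "x \<in> {a,b,c,d}" "y \<in> {a,b,c,d}" "sO x y" "lca ET x y = v"
  shows False
proof -
  define P where "P = {a,b,c,d}"
  have PL: "p \<in> leaves VT ET" if "p \<in> P" for p using that La Lb Lc Ld unfolding P_def by blast
  have PV: "p \<in> VT" if "p \<in> P" for p using leavesV[OF PL[OF that]] .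
  have Pb: "(v,p) \<in> ET\<^sup>*" if "p \<in> P" for p using that below unfolding P_def by blast
  have Pok: "ok p v" if "p \<in> P" for p using that oks unfolding P_def by blast
  have xP: "x \<in> P" and yP: "y \<in> P" using xy unfolding P_def by auto
  have sx: "\<mu> (lca ET x y) = Vx (lca ES (\<sigma> x) (\<sigma> y))" and xny: "x \<noteq> y"
    using xy(3) unfolding sO_edge_def by blast+
  define s where "s = lca ES (\<sigma> x) (\<sigma> y)"
  have ms: "\<mu> v = Vx s" using sx xy(4) unfolding s_def by simp
  have vnl: "v \<notin> leaves VT ET"
  proof
    assume "v \<in> leaves VT ET"
    then have "x = v" "y = v" using T.leaf_below Pb xP yP by blast+
    then show False using xny by simp
  qed
  have pnv: "p \<noteq> v" if "p \<in> P" for p using PL[OF that] vnl by blast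
  define ch where "ch p = (SOME w. (v,w) \<in> ET \<and> (w,p) \<in> ET\<^sup>*)" for p
  have ch: "(v, ch p) \<in> ET \<and> (ch p, p) \<in> ET\<^sup>*" if "p \<in> P" for p
  proof -
    have "\<exists>w. (v,w) \<in> ET \<and> (w,p) \<in> ET\<^sup>*" using T.child_toward[OF Pb[OF that] pnv[OF that, symmetric]] .
    then show ?thesis unfolding ch_def by (rule someI_ex)
  qed
  have ch_uniq: "w = ch p" if "p \<in> P" "(v,w) \<in> ET" "(w,p) \<in> ET\<^sup>*" for p w
  proof -
    have "(w, ch p) \<in> ET\<^sup>* \<or> (ch p, w) \<in> ET\<^sup>*" using T.chain[OF that(3)] ch[OF that(1)] by blast
    then show ?thesis using T.siblings[of v w "ch p"] T.siblings[of v "ch p" w] that(2) ch[OF that(1)] by blast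
  qed
  define cls where "cls w = (SOME c. (s,c) \<in> ES \<and> preceq_el ES (\<mu> w) (Ed s c))" for w
  define K where "K p = cls (ch p)" for p
  have K: "(s, K p) \<in> ES \<and> (K p, \<sigma> p) \<in> ES\<^sup>*" if pP: "p \<in> P" for p
  proof -
    have e1: "(v, ch p) \<in> ET" and e2: "(ch p, p) \<in> ET\<^sup>*" using ch[OF pP] by auto
    have chv: "ch p \<noteq> v" using e1 T.no_loop by blast
    have "(v, ch p) \<in> ET\<^sup>*" using e1 by simp
    then have nh: "\<not> hgt_edge ET ES \<mu> v (ch p)" using Pok[OF pP] e1 e2 chv unfolding ok_def by blast
    have m: "preceq_el ES (\<mu> (ch p)) (Vx s)" using mu_mono[OF e1 nh] ms by simp
    have "\<exists>c. (s,c) \<in> ES \<and> preceq_el ES (\<mu> (ch p)) (Ed s c)" using class_exists[OF e1 ms m] .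
    then have cK: "(s, K p) \<in> ES \<and> preceq_el ES (\<mu> (ch p)) (Ed s (K p))"
      unfolding K_def cls_def by (rule someI_ex)
    have okc: "ok p (ch p)"
      unfolding ok_def
    proof (intro allI impI)
      fix u z assume h: "(u,z) \<in> ET \<and> (z,p) \<in> ET\<^sup>* \<and> (ch p, z) \<in> ET\<^sup>* \<and> z \<noteq> ch p"
      have vz: "(v,z) \<in> ET\<^sup>*" using e1 h by (meson converse_rtrancl_into_rtrancl)
      have "z \<noteq> v"
      proof
        assume "z = v"
        then have "(ch p, v) \<in> ET\<^sup>*" using h by simp
        then have "ch p = v" using T.antisym e1 by blast
        then show False using chv by simp
      qed
      then show "\<not> hgt_edge ET ES \<mu> u z" using Pok[OF pP] h vz unfolding ok_def by blast
    qed
    have pm: "preceq_el ES (Vx (\<sigma> p)) (\<mu> (ch p))" using mu_path[OF PL[OF pP] e2 okc] .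
    have chV: "ch p \<in> VT" using e1 T.edge_V by blast
    have sV: "\<sigma> p \<in> VS" using leavesV[OF sigma_leaf[OF PL[OF pP]]] .
    have "preceq_el ES (Vx (\<sigma> p)) (Ed s (K p))"
      using S.el_trans[OF elV'[OF sV] mu_el[OF chV] elE'] pm cK by blast
    then show ?thesis using cK by (simp add: preceq_def)
  qed
  have F1: "sO p q \<longleftrightarrow> K p \<noteq> K q" if pP: "p \<in> P" and qP: "q \<in> P" and ne: "ch p \<noteq> ch q" for p q
  proof -
    have pq: "p \<noteq> q" using ne by blast
    have lv: "lca ET p q = v"
    proof (rule T.lca_eq[OF PV[OF pP] PV[OF qP] Pb[OF pP] Pb[OF qP]])
      fix w assume wp: "(w,p) \<in> ET\<^sup>*" and wq: "(w,q) \<in> ET\<^sup>*"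
      show "(w,v) \<in> ET\<^sup>*"
      proof (rule ccontr)
        assume nwv: "(w,v) \<notin> ET\<^sup>*"
        then have vw: "(v,w) \<in> ET\<^sup>*" using T.chain[OF wp Pb[OF pP]] by blast
        have "v \<noteq> w" using nwv by auto
        then obtain w1 where w1: "(v,w1) \<in> ET" "(w1,w) \<in> ET\<^sup>*" using T.child_toward[OF vw] by blast
        have "(w1,p) \<in> ET\<^sup>*" "(w1,q) \<in> ET\<^sup>*" using w1(2) wp wq by (meson rtrancl_trans)+
        then have "w1 = ch p" "w1 = ch q" using ch_uniq pP qP w1(1) by blast+
        then show False using ne by simp
      qed
    qed
    have "sO p q \<longleftrightarrow> \<mu> v = Vx (lca ES (\<sigma> p) (\<sigma> q))"
      using sO_char[OF PL[OF pP] PL[OF qP] pq] Pok[OF pP] Pok[OF qP] lv by simp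
    also have "\<dots> \<longleftrightarrow> lca ES (\<sigma> p) (\<sigma> q) = s" using ms by auto
    also have "\<dots> \<longleftrightarrow> K p \<noteq> K q"
      using S.lca_sib[OF leavesV[OF sigma_leaf[OF PL[OF pP]]] leavesV[OF sigma_leaf[OF PL[OF qP]]]]
        K[OF pP] K[OF qP] by blast
    finally show ?thesis .
  qed
  have aP: "a \<in> P" and bP: "b \<in> P" and cP: "c \<in> P" and dP: "d \<in> P" unfolding P_def by auto
  have Kac: "K a = K c" using F1[OF aP cP] nadj(1) unfolding K_def by metis
  have Kbd: "K b = K d" using F1[OF bP dP] nadj(2) unfolding K_def by metis
  have Kad: "K a = K d" using F1[OF aP dP] nadj(3) unfolding K_def by metis
  have "ch a = ch b" using F1[OF aP bP] adj(1) Kbd Kad by metis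
  moreover have "ch b = ch c" using F1[OF bP cP] adj(2) Kbd Kad Kac by metis
  moreover have "ch c = ch d" using F1[OF cP dP] adj(3) Kac Kad by metis
  ultimately have cxy: "ch x = ch y" using xP yP unfolding P_def by auto
  have "(ch x, x) \<in> ET\<^sup>*" using ch[OF xP] by blast
  moreover have "(ch x, y) \<in> ET\<^sup>*" using ch[OF yP] cxy by simp
  ultimately have "(ch x, v) \<in> ET\<^sup>*" using T.lca_props[OF PV[OF xP] PV[OF yP]] xy(4) by blast
  then have "ch x = v" using T.antisym ch[OF xP] by blast
  then show False using ch[OF xP] T.no_loop by metis
qed

end

theorem lemma35:
  fixes VT :: "'v set" and ET :: "('v \<times> 'v) set" and rT :: 'v
    and VS :: "'s set" and ES :: "('s \<times> 's) set" and rS :: 's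
    and \<sigma> :: "'v \<Rightarrow> 's" and \<mu> :: "'v \<Rightarrow> 's tree_elem"
    and \<tau>T :: "'v \<Rightarrow> real" and \<tau>S :: "'s \<Rightarrow> real"
  assumes "relaxed_scenario VT ET rT VS ES rS \<sigma> \<mu> \<tau>T \<tau>S"
  shows "cograph (leaves VT ET) (sO_edge VT ET ES \<sigma> \<mu>)"
proof -
  interpret scen VT ET rT VS ES rS \<sigma> \<mu> \<tau>T \<tau>S using assms by unfold_locales
  show ?thesis unfolding cograph_def
  proof (intro notI, elim bexE conjE)
    fix a b c d
    assume La: "a \<in> leaves VT ET" and Lb: "b \<in> leaves VT ET"
      and Lc: "c \<in> leaves VT ET" and Ld: "d \<in> leaves VT ET"
      and dist: "distinct [a,b,c,d]"
      and ab: "sO a b" and bc: "sO b c" and cd: "sO c d"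
      and nac: "\<not> sO a c" and nbd: "\<not> sO b d" and nad: "\<not> sO a d"
    have aV: "a \<in> VT" and bV: "b \<in> VT" and cV: "c \<in> VT" and dV: "d \<in> VT"
      using La Lb Lc Ld leavesV by metis+
    define Lab where "Lab = lca ET a b"
    define Lbc where "Lbc = lca ET b c"
    define Lcd where "Lcd = lca ET c d"
    have okab: "ok a Lab" "ok b Lab" using sO_ok[OF ab] unfolding Lab_def by blast+
    have okbc: "ok b Lbc" "ok c Lbc" using sO_ok[OF bc] unfolding Lbc_def by blast+
    have okcd: "ok c Lcd" "ok d Lcd" using sO_ok[OF cd] unfolding Lcd_def by blast+
    have pab: "(Lab,a) \<in> ET\<^sup>*" "(Lab,b) \<in> ET\<^sup>*" using T.lca_props[OF aV bV] unfolding Lab_def by blast+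
    have pbc: "(Lbc,b) \<in> ET\<^sup>*" "(Lbc,c) \<in> ET\<^sup>*" using T.lca_props[OF bV cV] unfolding Lbc_def by blast+
    have pcd: "(Lcd,c) \<in> ET\<^sup>*" "(Lcd,d) \<in> ET\<^sup>*" using T.lca_props[OF cV dV] unfolding Lcd_def by blast+
    have c1: "(Lab,Lbc) \<in> ET\<^sup>* \<or> (Lbc,Lab) \<in> ET\<^sup>*" using T.chain[OF pab(2) pbc(1)] .
    have c2: "(Lbc,Lcd) \<in> ET\<^sup>* \<or> (Lcd,Lbc) \<in> ET\<^sup>*" using T.chain[OF pbc(2) pcd(1)] .
    have c3: "(Lab,Lcd) \<in> ET\<^sup>* \<or> (Lcd,Lab) \<in> ET\<^sup>*" if "(Lab,Lbc) \<in> ET\<^sup>*" "(Lcd,Lbc) \<in> ET\<^sup>*"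
      using T.chain[OF that] .
    have cases: "((Lbc,Lab) \<in> ET\<^sup>* \<and> (Lbc,Lcd) \<in> ET\<^sup>*) \<or>
                 ((Lab,Lbc) \<in> ET\<^sup>* \<and> (Lab,Lcd) \<in> ET\<^sup>*) \<or>
                 ((Lcd,Lab) \<in> ET\<^sup>* \<and> (Lcd,Lbc) \<in> ET\<^sup>*)"
      using c1 c2 c3 by (meson rtrancl_trans)
    then show False
    proof (elim disjE conjE)
      assume h1: "(Lbc,Lab) \<in> ET\<^sup>*" and h2: "(Lbc,Lcd) \<in> ET\<^sup>*"
      have oa: "ok a Lbc" using ok_up[OF okab(1) pab(1) h1 okbc(1) pab(2)] .
      have od: "ok d Lbc" using ok_up[OF okcd(2) pcd(2) h2 okbc(2) pcd(1)] .
      have r1: "(Lbc,a) \<in> ET\<^sup>*" using rtrancl_trans[OF h1 pab(1)] .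
      have r2: "(Lbc,d) \<in> ET\<^sup>*" using rtrancl_trans[OF h2 pcd(2)] .
      have m1: "b \<in> {a,b,c,d}" "c \<in> {a,b,c,d}" by simp_all
      show False
        using core[OF La Lb Lc Ld ab bc cd nac nbd nad r1 pbc(1) pbc(2) r2 oa okbc(1) okbc(2) od
            m1 bc] Lbc_def by simp
    next
      assume h1: "(Lab,Lbc) \<in> ET\<^sup>*" and h2: "(Lab,Lcd) \<in> ET\<^sup>*"
      have oc: "ok c Lab" using ok_up[OF okbc(2) pbc(2) h1 okab(2) pbc(1)] .
      have od: "ok d Lab" using ok_up[OF okcd(2) pcd(2) h2 oc pcd(1)] .
      have r1: "(Lab,c) \<in> ET\<^sup>*" using rtrancl_trans[OF h1 pbc(2)] .
      have r2: "(Lab,d) \<in> ET\<^sup>*" using rtrancl_trans[OF h2 pcd(2)] .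
      have m1: "a \<in> {a,b,c,d}" "b \<in> {a,b,c,d}" by simp_all
      show False
        using core[OF La Lb Lc Ld ab bc cd nac nbd nad pab(1) pab(2) r1 r2 okab(1) okab(2) oc od
            m1 ab] Lab_def by simp
    next
      assume h1: "(Lcd,Lab) \<in> ET\<^sup>*" and h2: "(Lcd,Lbc) \<in> ET\<^sup>*"
      have ob: "ok b Lcd" using ok_up[OF okbc(1) pbc(1) h2 okcd(1) pbc(2)] .
      have oa: "ok a Lcd" using ok_up[OF okab(1) pab(1) h1 ob pab(2)] .
      have r1: "(Lcd,a) \<in> ET\<^sup>*" using rtrancl_trans[OF h1 pab(1)] .
      have r2: "(Lcd,b) \<in> ET\<^sup>*" using rtrancl_trans[OF h2 pbc(1)] .
      have m1: "c \<in> {a,b,c,d}" "d \<in> {a,b,c,d}" by simp_all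
      show False
        using core[OF La Lb Lc Ld ab bc cd nac nbd nad r1 r2 pcd(1) pcd(2) oa ob okcd(1) okcd(2)
            m1 cd] Lcd_def by simp
    qed
  qed
qed

end
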